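(* Let $G^\dagger=(V^\dagger,E^\dagger)$ be a graph whose vertex set is partitioned into "blossom" vertices and "non-blossom" vertices, and let $w^\dagger\in\mathbb{R}^{|E^\dagger|}$. Consider the LP: minimize $w^\dagger\cdot x$ subject to $\sum_{e\in\delta(v)}x_e=1$ for every non-blossom vertex $v\in V^\dagger$, $\sum_{e\in\delta(v)}x_e\ge 1$ for every blossom vertex $v\in V^\dagger$, and $x\in[0,1]^{|E^\dagger|}$. If this LP is feasible, then it has an optimal solution $x^*\in\{0,\tfrac12,1\}^{|E^\dagger|}$ such that the set of edges $e$ with $x^*_e=\tfrac12$ forms a collection of vertex-disjoint odd cycles.
   Context: $\delta(v)$ denotes the set of edges of $G^\dagger$ incident to $v$. *)

theory Defs
  imports Complex_Main
begin

definition simple_graph :: "'a set \<Rightarrow> 'a set set \<Rightarrow> bool" where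
  "simple_graph V E \<longleftrightarrow> finite V \<and>
     (\<forall>e\<in>E. \<exists>u v. e = {u, v} \<and> u \<noteq> v \<and> u \<in> V \<and> v \<in> V)"

definition delta :: "'a set set \<Rightarrow> 'a \<Rightarrow> 'a set set" where
  "delta E v = {e \<in> E. v \<in> e}"

definition lp_feasible :: "'a set \<Rightarrow> 'a set set \<Rightarrow> 'a set \<Rightarrow> ('a set \<Rightarrow> real) \<Rightarrow> bool" where
  "lp_feasible V E B x \<longleftrightarrow>
     (\<forall>e\<in>E. 0 \<le> x e \<and> x e \<le> 1) \<and>
     (\<forall>v\<in>V - B. (\<Sum>e\<in>delta E v. x e) = 1) \<and>
     (\<forall>v\<in>B. (\<Sum>e\<in>delta E v. x e) \<ge> 1)"

definition lp_cost :: "'a set set \<Rightarrow> ('a set \<Rightarrow> real) \<Rightarrow> ('a set \<Rightarrow> real) \<Rightarrow> real" where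
  "lp_cost E w x = (\<Sum>e\<in>E. w e * x e)"

definition lp_optimal :: "'a set \<Rightarrow> 'a set set \<Rightarrow> 'a set \<Rightarrow> ('a set \<Rightarrow> real) \<Rightarrow> ('a set \<Rightarrow> real) \<Rightarrow> bool" where
  "lp_optimal V E B w x \<longleftrightarrow> lp_feasible V E B x \<and>
     (\<forall>y. lp_feasible V E B y \<longrightarrow> lp_cost E w x \<le> lp_cost E w y)"

text \<open>A cycle given by its cyclic list of distinct vertices (length at least 3).\<close>
definition cycle_edges :: "'a list \<Rightarrow> 'a set set" where
  "cycle_edges vs = {{vs ! i, vs ! ((i + 1) mod length vs)} | i. i < length vs}"

definition is_odd_cycle :: "'a list \<Rightarrow> bool" where
  "is_odd_cycle vs \<longleftrightarrow> distinct vs \<and> length vs \<ge> 3 \<and> odd (length vs)"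

definition vertex_disjoint_odd_cycles :: "'a set set \<Rightarrow> bool" where
  "vertex_disjoint_odd_cycles H \<longleftrightarrow>
     (\<exists>Cs :: 'a list set. (\<forall>c\<in>Cs. is_odd_cycle c) \<and>
        (\<forall>c\<in>Cs. \<forall>d\<in>Cs. c \<noteq> d \<longrightarrow> set c \<inter> set d = {}) \<and>
        H = \<Union> (cycle_edges ` Cs))"

end

theory Submission
  imports Defs
begin


definition ce :: "'a list \<Rightarrow> nat \<Rightarrow> 'a set" where
  "ce c i = {c ! i, c ! ((i + 1) mod length c)}"

lemma cycle_edges_eq: "cycle_edges c = ce c ` {..<length c}"
  by (auto simp: cycle_edges_def ce_def)

lemma suc_mod: "(i::nat) < n \<Longrightarrow> (i + 1) mod n = (if i + 1 = n then 0 else i + 1)"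
proof (cases "i + 1 = n")
  case True then show ?thesis by simp
next
  case False
  assume "i < n" then have "i + 1 < n" using False by auto
  then show ?thesis using False by simp
qed

lemma ce_inj:
  assumes "distinct c" "3 \<le> length c" "i < length c" "j < length c" "ce c i = ce c j"
  shows "i = j"
proof -
  let ?n = "length c"
  have "0 < ?n" using assms by auto
  then have mi: "(i+1) mod ?n < ?n" "(j+1) mod ?n < ?n" by auto
  from assms(5) have "(c!i = c!j \<and> c!((i+1) mod ?n) = c!((j+1) mod ?n)) \<or>
      (c!i = c!((j+1) mod ?n) \<and> c!((i+1) mod ?n) = c!j)"
    unfolding ce_def by (auto simp: doubleton_eq_iff)
  then have "i = j \<or> (i = (j+1) mod ?n \<and> (i+1) mod ?n = j)"
    using assms mi by (auto simp: nth_eq_iff_index_eq)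
  then show ?thesis using assms(2,3,4) suc_mod[of i ?n] suc_mod[of j ?n]
    by (auto split: if_splits)
qed

lemma mem_ce:
  assumes "distinct c" "k < length c" "i < length c"
  shows "c ! k \<in> ce c i \<longleftrightarrow> (i = k \<or> (i + 1) mod length c = k)"
proof -
  have "0 < length c" using assms by auto
  then have "(i+1) mod length c < length c" by auto
  then show ?thesis using assms unfolding ce_def by (auto simp: nth_eq_iff_index_eq)
qed

definition prv :: "nat \<Rightarrow> nat \<Rightarrow> nat" where "prv n k = (k + n - 1) mod n"

lemma prv_props:
  assumes "k < n" "3 \<le> n"
  shows "prv n k < n" "(prv n k + 1) mod n = k" "prv n k \<noteq> k"
    "prv n k = (if k = 0 then n - 1 else k - 1)"
proof -
  show p: "prv n k = (if k = 0 then n - 1 else k - 1)"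
    using assms unfolding prv_def
    by (cases k) (auto simp: mod_if)
  show "prv n k < n" using assms p by auto
  show "(prv n k + 1) mod n = k" using assms p by auto
  show "prv n k \<noteq> k" using assms p by auto
qed

lemma edges_at:
  assumes "distinct c" "3 \<le> length c" "k < length c"
  shows "{e \<in> cycle_edges c. c ! k \<in> e} = {ce c k, ce c (prv (length c) k)}"
    and "ce c k \<noteq> ce c (prv (length c) k)"
proof -
  let ?n = "length c"
  note P = prv_props[OF assms(3) assms(2)]
  show "{e \<in> cycle_edges c. c ! k \<in> e} = {ce c k, ce c (prv (length c) k)}"
  proof
    show "{e \<in> cycle_edges c. c ! k \<in> e} \<subseteq> {ce c k, ce c (prv ?n k)}"
    proof
      fix e assume "e \<in> {e \<in> cycle_edges c. c ! k \<in> e}"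
      then obtain i where i: "i < ?n" "e = ce c i" "c ! k \<in> ce c i"
        by (auto simp: cycle_edges_eq)
      then have "i = k \<or> (i + 1) mod ?n = k" using mem_ce assms by blast
      moreover have "(i + 1) mod ?n = k \<Longrightarrow> i = prv ?n k"
        using i assms P suc_mod[of i ?n] by (auto split: if_splits)
      ultimately show "e \<in> {ce c k, ce c (prv ?n k)}" using i by auto
    qed
    show "{ce c k, ce c (prv ?n k)} \<subseteq> {e \<in> cycle_edges c. c ! k \<in> e}"
      using assms P mem_ce[OF assms(1,3)] by (auto simp: cycle_edges_eq)
  qed
  show "ce c k \<noteq> ce c (prv (length c) k)"
    using ce_inj[OF assms(1,2,3) P(1)] P(3) by metis
qed

lemma mem_cycle_edge: "e \<in> cycle_edges c \<Longrightarrow> v \<in> e \<Longrightarrow> v \<in> set c"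
proof -
  assume "e \<in> cycle_edges c" "v \<in> e"
  then obtain i where "i < length c" "e = {c ! i, c ! ((i + 1) mod length c)}"
    by (auto simp: cycle_edges_def)
  moreover then have "(i + 1) mod length c < length c" by (metis mod_less_divisor gr_implies_not_zero neq0_conv)
  ultimately show ?thesis using \<open>v \<in> e\<close> by auto
qed

lemma vertex_in_cycle_edge: "i < length c \<Longrightarrow> c ! i \<in> ce c i"
  by (auto simp: ce_def)



lemma lin_sol:
  fixes a :: "'l \<Rightarrow> 'e \<Rightarrow> real"
  assumes "finite L"
  shows "finite F \<Longrightarrow> card L < card F \<Longrightarrow>
    \<exists>d. (\<forall>e. e \<notin> F \<longrightarrow> d e = 0) \<and> (\<exists>e\<in>F. d e \<noteq> 0) \<and> (\<forall>l\<in>L. (\<Sum>e\<in>F. a l e * d e) = 0)"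
  using assms
proof (induction L arbitrary: F a rule: finite_induct)
  case empty
  then obtain e0 where "e0 \<in> F" by (metis card.empty card_gt_0_iff equals0I)
  then show ?case by (rule_tac x="\<lambda>e. if e = e0 then 1 else 0" in exI) auto
next
  case (insert l L)
  show ?case
  proof (cases "\<forall>e\<in>F. a l e = 0")
    case True
    from insert.IH[of F a] insert.prems insert.hyps obtain d where
      d: "\<forall>e. e \<notin> F \<longrightarrow> d e = 0" "\<exists>e\<in>F. d e \<noteq> 0" "\<forall>l\<in>L. (\<Sum>e\<in>F. a l e * d e) = 0" by auto
    then show ?thesis using True by (rule_tac x=d in exI) auto
  next
    case False
    then obtain e0 where e0: "e0 \<in> F" "a l e0 \<noteq> 0" by auto
    define F' where "F' = F - {e0}"
    define a' where "a' = (\<lambda>m e. a m e - a m e0 * a l e / a l e0)"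
    have fF': "finite F'" using insert.prems F'_def by auto
    have cF': "card L < card F'" using insert.prems insert.hyps e0 F'_def by auto
    from insert.IH[OF fF' cF', of a'] obtain d' where
      d': "\<forall>e. e \<notin> F' \<longrightarrow> d' e = 0" "\<exists>e\<in>F'. d' e \<noteq> 0" "\<forall>m\<in>L. (\<Sum>e\<in>F'. a' m e * d' e) = 0" by auto
    define d where "d = d'(e0 := - (\<Sum>e\<in>F'. a l e * d' e) / a l e0)"
    have split: "(\<Sum>e\<in>F. a m e * d e) = a m e0 * d e0 + (\<Sum>e\<in>F'. a m e * d' e)" for m
    proof -
      have "(\<Sum>e\<in>F. a m e * d e) = a m e0 * d e0 + (\<Sum>e\<in>F'. a m e * d e)"
        using e0 insert.prems F'_def by (simp add: sum.remove)
      moreover have "(\<Sum>e\<in>F'. a m e * d e) = (\<Sum>e\<in>F'. a m e * d' e)"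
        by (rule sum.cong) (auto simp: d_def F'_def)
      ultimately show ?thesis by simp
    qed
    have "\<forall>m\<in>insert l L. (\<Sum>e\<in>F. a m e * d e) = 0"
    proof
      fix m assume m: "m \<in> insert l L"
      show "(\<Sum>e\<in>F. a m e * d e) = 0"
      proof (cases "m = l")
        case True
        then show ?thesis using split[of l] e0 by (simp add: d_def F'_def)
      next
        case False
        with m have "m \<in> L" by auto
        with d' have "(\<Sum>e\<in>F'. a' m e * d' e) = 0" by auto
        hence "(\<Sum>e\<in>F'. a m e * d' e) - a m e0 / a l e0 * (\<Sum>e\<in>F'. a l e * d' e) = 0"
          by (simp add: a'_def algebra_simps sum_subtractf sum_distrib_left)
        then show ?thesis using split[of m] e0 by (simp add: d_def F'_def field_simps)
      qed
    qed
    moreover have "\<forall>e. e \<notin> F \<longrightarrow> d e = 0" using d' e0 by (auto simp: d_def F'_def)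
    moreover have "\<exists>e\<in>F. d e \<noteq> 0" using d' e0 by (auto simp: d_def F'_def)
    ultimately show ?thesis by blast
  qed
qed



lemma nbr:
  assumes "\<forall>e\<in>F. \<exists>u v. e = {u,v} \<and> u \<noteq> v" "f \<in> F" "z \<in> f"
  shows "\<exists>u. f = {z,u} \<and> u \<noteq> z"
proof -
  obtain a b where "f = {a,b}" "a \<noteq> b" using assms by blast
  then show ?thesis using assms(3) by (auto simp: insert_commute)
qed

lemma find_cycle:
  assumes fin: "finite F" and edg: "\<forall>e\<in>F. \<exists>u v. e = {u,v} \<and> u \<noteq> v"
    and deg: "\<forall>e\<in>F. \<forall>v\<in>e. card {f\<in>F. v \<in> f} = 2" and ne: "F \<noteq> {}"
  shows "\<exists>c. distinct c \<and> 3 \<le> length c \<and> cycle_edges c \<subseteq> F \<and>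
           (\<forall>v\<in>set c. \<forall>f\<in>F. v \<in> f \<longrightarrow> f \<in> cycle_edges c)"
proof -
  define W where "W = \<Union>F"
  have finW: "finite W" unfolding W_def using fin edg by fastforce
  obtain e0 v0 where e0: "e0 \<in> F" "v0 \<in> e0" using ne edg by blast
  define P where "P p \<longleftrightarrow> distinct p \<and> p \<noteq> [] \<and> set p \<subseteq> W \<and>
     (\<forall>i. Suc i < length p \<longrightarrow> {p!i, p!Suc i} \<in> F)" for p
  have P0: "P [v0]" using e0 by (auto simp: P_def W_def)
  have bnd: "\<forall>p. P p \<longrightarrow> length p < card W + 1"
  proof (intro allI impI)
    fix p assume "P p"
    then have "card (set p) \<le> card W" "card (set p) = length p"
      using finW by (auto simp: P_def intro: card_mono distinct_card)
    then show "length p < card W + 1" by simp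
  qed
  obtain p where Pp: "P p" and mx: "\<forall>q. P q \<longrightarrow> length q \<le> length p"
    using ex_has_greatest_nat[of P "[v0]" length "card W + 1"] P0 bnd by blast
  have dp: "distinct p" and pne: "p \<noteq> []" and pW: "set p \<subseteq> W"
    and adj: "\<And>i. Suc i < length p \<Longrightarrow> {p!i, p!Suc i} \<in> F" using Pp by (auto simp: P_def)
  define k where "k = length p - 1"
  have k: "k < length p" "Suc k = length p" using pne by (auto simp: k_def)
  define z where "z = p ! k"
  have zW: "z \<in> W" using pW k by (auto simp: z_def)
  have ext: "u \<in> set p" if u: "{z,u} \<in> F" for u
  proof (rule ccontr)
    assume nu: "u \<notin> set p"
    have "P (p @ [u])" unfolding P_def
    proof (intro conjI allI impI)
      show "distinct (p @ [u])" using dp nu by simp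
      show "p @ [u] \<noteq> []" by simp
      show "set (p @ [u]) \<subseteq> W" using pW u by (auto simp: W_def)
      fix i assume i: "Suc i < length (p @ [u])"
      show "{(p @ [u]) ! i, (p @ [u]) ! Suc i} \<in> F"
      proof (cases "Suc i < length p")
        case True then show ?thesis using adj[OF True] by (simp add: nth_append)
      next
        case False
        then have "i = k" using i k by auto
        then show ?thesis using u k by (simp add: nth_append z_def)
      qed
    qed
    then show False using mx by fastforce
  qed
  obtain ez where ez: "ez \<in> F" "z \<in> ez" using zW by (auto simp: W_def)
  have "card {f\<in>F. z \<in> f} = 2" using deg ez by auto
  then obtain f1 f2 where f12: "f1 \<noteq> f2" "{f\<in>F. z \<in> f} = {f1, f2}"
    by (auto simp: card_2_iff)
  have "f1 \<in> F" "z \<in> f1" "f2 \<in> F" "z \<in> f2" using f12 by blast+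
  then obtain u1 u2 where u: "f1 = {z,u1}" "u1 \<noteq> z" "f2 = {z,u2}" "u2 \<noteq> z"
    using nbr[OF edg] by metis
  have u12: "u1 \<noteq> u2" using u f12 by auto
  have "u1 \<in> set p" "u2 \<in> set p" using ext u \<open>f1 \<in> F\<close> \<open>f2 \<in> F\<close> by auto
  then obtain j1 j2 where j: "j1 < length p" "p ! j1 = u1" "j2 < length p" "p ! j2 = u2"
    by (auto simp: in_set_conv_nth)
  have "j1 \<noteq> k" "j2 \<noteq> k" "j1 \<noteq> j2" using j u u12 by (auto simp: z_def)
  then obtain j where jj: "j + 1 < k" "{z, p ! j} \<in> F"
  proof -
    assume r: "\<And>j. j + 1 < k \<Longrightarrow> {z, p ! j} \<in> F \<Longrightarrow> thesis"
    assume ne: "j1 \<noteq> k" "j2 \<noteq> k" "j1 \<noteq> j2"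
    show thesis
    proof (cases "j1 + 1 < k")
      case True then show ?thesis using r[of j1] j u \<open>f1 \<in> F\<close> by auto
    next
      case False
      then have "j2 + 1 < k" using ne j k by auto
      then show ?thesis using r[of j2] j u \<open>f2 \<in> F\<close> by auto
    qed
  qed
  have j0: "j = 0"
  proof (rule ccontr)
    assume "j \<noteq> 0"
    define g1 where "g1 = {p!(j-1), p!j}"
    define g2 where "g2 = {p!j, p!(j+1)}"
    define g3 where "g3 = {z, p!j}"
    have "g1 \<in> F" using adj[of "j-1"] jj k \<open>j \<noteq> 0\<close> by (simp add: g1_def)
    moreover have "g2 \<in> F" using adj[of "j"] jj k by (simp add: g2_def)
    moreover have "g3 \<in> F" using jj by (simp add: g3_def)
    ultimately have sub: "{g1,g2,g3} \<subseteq> {f\<in>F. p!j \<in> f}" by (auto simp: g1_def g2_def g3_def)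
    have d1: "p!(j-1) \<noteq> p!(j+1)" "p!(j-1) \<noteq> z" "p!(j+1) \<noteq> z"
      "p!(j-1) \<noteq> p!j" "p!(j+1) \<noteq> p!j"
      using dp jj k \<open>j \<noteq> 0\<close> by (auto simp: z_def nth_eq_iff_index_eq)
    have "card {g1,g2,g3} = 3" using d1
      by (auto simp: g1_def g2_def g3_def doubleton_eq_iff card_insert_if)
    moreover have "card {g1,g2,g3} \<le> card {f\<in>F. p!j \<in> f}"
      using sub fin by (auto intro: card_mono)
    moreover have "card {f\<in>F. p!j \<in> f} = 2" using deg \<open>g3 \<in> F\<close> by (auto simp: g3_def)
    ultimately show False by simp
  qed
  have len: "3 \<le> length p" using jj k by auto
  have sub: "cycle_edges p \<subseteq> F"
  proof
    fix e assume "e \<in> cycle_edges p"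
    then obtain i where i: "i < length p" "e = ce p i" by (auto simp: cycle_edges_eq)
    show "e \<in> F"
    proof (cases "i < k")
      case True
      then have "(i+1) mod length p = Suc i" using k by simp
      then show ?thesis using adj[of i] i True k by (simp add: ce_def)
    next
      case False
      then have "i = k" using i k by auto
      then have "(i+1) mod length p = 0" using k by simp
      then show ?thesis using jj j0 \<open>i = k\<close> i by (simp add: ce_def z_def insert_commute)
    qed
  qed
  have clo: "\<forall>v\<in>set p. \<forall>f\<in>F. v \<in> f \<longrightarrow> f \<in> cycle_edges p"
  proof (intro ballI impI)
    fix v f assume v: "v \<in> set p" and f: "f \<in> F" "v \<in> f"
    then obtain i where i: "i < length p" "v = p ! i" by (auto simp: in_set_conv_nth)
    note EA = edges_at[OF dp len i(1)]
    have s1: "{e \<in> cycle_edges p. p ! i \<in> e} \<subseteq> {f\<in>F. v \<in> f}" using sub i by auto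
    have c1: "card {e \<in> cycle_edges p. p ! i \<in> e} = 2" using EA by simp
    have c2: "card {f\<in>F. v \<in> f} = 2" using deg f by auto
    have "{e \<in> cycle_edges p. p ! i \<in> e} = {f\<in>F. v \<in> f}"
      using card_subset_eq[OF _ s1] c1 c2 fin by auto
    then show "f \<in> cycle_edges p" using f by auto
  qed
  show ?thesis using dp len sub clo by blast
qed


lemma two_reg:
  "finite F \<Longrightarrow> (\<forall>e\<in>F. \<exists>u v. e = {u,v} \<and> u \<noteq> v) \<Longrightarrow>
   (\<forall>e\<in>F. \<forall>v\<in>e. card {f\<in>F. v \<in> f} = 2) \<Longrightarrow>
   \<exists>Cs. (\<forall>c\<in>Cs. distinct c \<and> 3 \<le> length c) \<and>
        (\<forall>c\<in>Cs. \<forall>d\<in>Cs. c \<noteq> d \<longrightarrow> set c \<inter> set d = {}) \<and> F = \<Union>(cycle_edges ` Cs)"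
proof (induction "card F" arbitrary: F rule: less_induct)
  case less
  show ?case
  proof (cases "F = {}")
    case True then show ?thesis by (rule_tac x="{}" in exI) auto
  next
    case False
    obtain c where c: "distinct c" "3 \<le> length c" "cycle_edges c \<subseteq> F"
      "\<forall>v\<in>set c. \<forall>f\<in>F. v \<in> f \<longrightarrow> f \<in> cycle_edges c"
      using find_cycle[OF less.prems False] by blast
    define F' where "F' = F - cycle_edges c"
    have out: "v \<notin> set c" if "e \<in> F'" "v \<in> e" for e v
      using that c(4) by (auto simp: F'_def)
    have same: "{f\<in>F'. v \<in> f} = {f\<in>F. v \<in> f}" if "v \<notin> set c" for v
      using that mem_cycle_edge by (fastforce simp: F'_def)
    have h1: "finite F'" using less.prems by (simp add: F'_def)
    have h2: "\<forall>e\<in>F'. \<exists>u v. e = {u,v} \<and> u \<noteq> v" using less.prems by (simp add: F'_def)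
    have h3: "\<forall>e\<in>F'. \<forall>v\<in>e. card {f\<in>F'. v \<in> f} = 2"
    proof (intro ballI)
      fix e v assume "e \<in> F'" "v \<in> e"
      then have "v \<notin> set c" "e \<in> F" using out by (auto simp: F'_def)
      have "card {f\<in>F. v \<in> f} = 2" using less.prems(3) \<open>e \<in> F\<close> \<open>v \<in> e\<close> by blast
      then show "card {f\<in>F'. v \<in> f} = 2" using same[OF \<open>v \<notin> set c\<close>] by simp
    qed
    have "ce c 0 \<in> cycle_edges c" using c(2) by (auto simp: cycle_edges_eq)
    then have "cycle_edges c \<noteq> {}" by blast
    then have "F' \<subset> F" using c(3) unfolding F'_def by blast
    then have "card F' < card F" using less.prems(1) by (rule psubset_card_mono[rotated])
    from less.hyps[OF this h1 h2 h3] obtain Cs where Cs: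
      "\<forall>c\<in>Cs. distinct c \<and> 3 \<le> length c"
      "\<forall>c\<in>Cs. \<forall>d\<in>Cs. c \<noteq> d \<longrightarrow> set c \<inter> set d = {}" "F' = \<Union>(cycle_edges ` Cs)" by blast
    have disj: "set d \<inter> set c = {}" if "d \<in> Cs" for d
    proof -
      { fix x assume "x \<in> set d"
        then obtain i where i: "i < length d" "x = d ! i" by (auto simp: in_set_conv_nth)
        then have "ce d i \<in> F'" using Cs(3) that by (auto simp: cycle_edges_eq)
        then have "x \<notin> set c" using out i vertex_in_cycle_edge by metis }
      then show ?thesis by auto
    qed
    show ?thesis
    proof (rule exI[of _ "insert c Cs"], intro conjI)
      show "\<forall>c\<in>insert c Cs. distinct c \<and> 3 \<le> length c" using Cs c by auto
      show "\<forall>ca\<in>insert c Cs. \<forall>d\<in>insert c Cs. ca \<noteq> d \<longrightarrow> set ca \<inter> set d = {}"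
        using Cs(2) disj by blast
      show "F = \<Union> (cycle_edges ` insert c Cs)" using Cs(3) c(3) by (auto simp: F'_def)
    qed
  qed
qed



definition Fr :: "'a set set \<Rightarrow> ('a set \<Rightarrow> real) \<Rightarrow> 'a set set" where
  "Fr E x = {e\<in>E. 0 < x e \<and> x e < 1}"
definition Sl :: "'a set set \<Rightarrow> 'a set \<Rightarrow> ('a set \<Rightarrow> real) \<Rightarrow> 'a set" where
  "Sl E B x = {v\<in>B. (\<Sum>e\<in>delta E v. x e) > 1}"
definition kern :: "'a set \<Rightarrow> 'a set set \<Rightarrow> ('a set \<Rightarrow> real) \<Rightarrow> ('a set \<Rightarrow> real) \<Rightarrow> bool" where
  "kern V E x d \<longleftrightarrow> (\<forall>e. e \<notin> Fr E x \<longrightarrow> d e = 0) \<and>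
     (\<forall>v\<in>V. (\<Sum>e\<in>delta E v. x e) = 1 \<longrightarrow> (\<Sum>e\<in>delta E v. d e) = 0)"

lemma finE: "simple_graph V E \<Longrightarrow> finite E"
proof -
  assume s: "simple_graph V E"
  then have "E \<subseteq> Pow V" by (fastforce simp: simple_graph_def)
  moreover have "finite V" using s by (simp add: simple_graph_def)
  ultimately show ?thesis by (meson finite_Pow_iff rev_finite_subset)
qed

lemma finD: "simple_graph V E \<Longrightarrow> finite (delta E v)"
  by (drule finE) (auto simp: delta_def)

lemma perturb0:
  assumes sg: "simple_graph V E" and BV: "B \<subseteq> V" and fx: "lp_feasible V E B x"
    and kd: "kern V E x d" and e1: "d e1 \<noteq> 0" and cd: "(\<Sum>e\<in>E. w e * d e) \<le> 0"
  shows "\<exists>x'. lp_feasible V E B x' \<and> lp_cost E w x' \<le> lp_cost E w x \<and>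
           card (Fr E x') + card (Sl E B x') < card (Fr E x) + card (Sl E B x)"
proof -
  have fE: "finite E" using finE[OF sg] .
  have fV: "finite V" using sg by (simp add: simple_graph_def)
  have fB: "finite B" using BV fV finite_subset by blast
  have fF: "finite (Fr E x)" using fE by (simp add: Fr_def)
  have fS: "finite (Sl E B x)" using fB by (simp add: Sl_def)
  have dz: "\<And>e. e \<notin> Fr E x \<Longrightarrow> d e = 0" and dt: "\<And>v. v \<in> V \<Longrightarrow> (\<Sum>e\<in>delta E v. x e) = 1 \<Longrightarrow> (\<Sum>e\<in>delta E v. d e) = 0"
    using kd by (auto simp: kern_def)
  have e1F: "e1 \<in> Fr E x" using dz e1 by blast
  have xb: "\<And>e. e \<in> E \<Longrightarrow> 0 \<le> x e \<and> x e \<le> 1" using fx by (simp add: lp_feasible_def)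
  have xV: "\<And>v. v \<in> V - B \<Longrightarrow> (\<Sum>e\<in>delta E v. x e) = 1" using fx by (simp add: lp_feasible_def)
  have xB: "\<And>v. v \<in> B \<Longrightarrow> (\<Sum>e\<in>delta E v. x e) \<ge> 1" using fx by (simp add: lp_feasible_def)
  define sv where "sv v = (\<Sum>e\<in>delta E v. x e)" for v
  define dv where "dv v = (\<Sum>e\<in>delta E v. d e)" for v
  define T where "T = ((\<lambda>e. (1 - x e) / d e) ` {e\<in>Fr E x. d e > 0}) \<union>
      ((\<lambda>e. x e / (- d e)) ` {e\<in>Fr E x. d e < 0}) \<union>
      ((\<lambda>v. (sv v - 1) / (- dv v)) ` {v\<in>Sl E B x. dv v < 0})"
  have fT: "finite T" using fF fS by (simp add: T_def)
  have "d e1 > 0 \<or> d e1 < 0" using e1 by linarith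
  then have neT: "T \<noteq> {}" using e1F unfolding T_def by blast
  have posT: "\<And>s. s \<in> T \<Longrightarrow> s > 0"
    unfolding T_def by (auto simp: Fr_def Sl_def sv_def intro!: divide_pos_pos divide_pos_neg)
  define t where "t = Min T"
  have tT: "t \<in> T" using fT neT by (simp add: t_def)
  have tpos: "t > 0" using posT tT by blast
  have tle: "\<And>s. s \<in> T \<Longrightarrow> t \<le> s" using fT by (simp add: t_def)
  define x' where "x' e = x e + t * d e" for e
  have sv': "(\<Sum>e\<in>delta E v. x' e) = sv v + t * dv v" for v
    by (simp add: x'_def sv_def dv_def sum.distrib sum_distrib_left)
  have eb: "0 \<le> x' e \<and> x' e \<le> 1" if e: "e \<in> E" for e
  proof (cases "e \<in> Fr E x")
    case False then show ?thesis using dz xb e by (simp add: x'_def)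
  next
    case True
    then have x01: "0 < x e" "x e < 1" by (auto simp: Fr_def)
    consider "d e > 0" | "d e < 0" | "d e = 0" by linarith
    then show ?thesis
    proof cases
      case 1
      then have le: "t \<le> (1 - x e) / d e" using tle True by (auto simp: T_def)
      have "t * d e \<le> 1 - x e" using iffD1[OF pos_le_divide_eq[OF 1] le] .
      then show ?thesis using 1 x01 tpos by (simp add: x'_def)
    next
      case 2
      then have le: "t \<le> x e / (- d e)" using tle True by (auto simp: T_def)
      have c: "0 < - d e" using 2 by simp
      have "t * (- d e) \<le> x e" using iffD1[OF pos_le_divide_eq[OF c] le] .
      moreover have "t * d e \<le> 0" using 2 tpos by (intro mult_nonneg_nonpos) auto
      ultimately show ?thesis using x01 by (simp add: x'_def)
    qed (use x01 in \<open>simp add: x'_def\<close>)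
  qed
  have tight: "(\<Sum>e\<in>delta E v. x' e) = 1" if "v \<in> V" "sv v = 1" for v
    using dt that sv' by (simp add: sv_def dv_def)
  have vB: "(\<Sum>e\<in>delta E v. x' e) \<ge> 1" if v: "v \<in> B" for v
  proof (cases "sv v = 1")
    case True then show ?thesis using tight BV v by auto
  next
    case False
    then have gt: "sv v > 1" using xB v by (force simp: sv_def)
    show ?thesis
    proof (cases "dv v < 0")
      case True
      then have "v \<in> Sl E B x" using gt v by (simp add: Sl_def sv_def)
      then have le: "t \<le> (sv v - 1) / (- dv v)" using tle True by (auto simp: T_def)
      have c: "0 < - dv v" using True by simp
      have "t * (- dv v) \<le> sv v - 1" using iffD1[OF pos_le_divide_eq[OF c] le] .
      then show ?thesis using sv'[of v] by simp
    next
      case False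
      then show ?thesis using gt sv' tpos by (simp add: add_increasing2)
    qed
  qed
  have feas: "lp_feasible V E B x'"
    unfolding lp_feasible_def using eb vB tight xV by (auto simp: sv_def)
  have cost: "lp_cost E w x' \<le> lp_cost E w x"
  proof -
    have "lp_cost E w x' = lp_cost E w x + t * (\<Sum>e\<in>E. w e * d e)"
      by (simp add: lp_cost_def x'_def algebra_simps sum.distrib sum_distrib_left)
    moreover have "t * (\<Sum>e\<in>E. w e * d e) \<le> 0" using tpos cd by (simp add: mult_nonneg_nonpos)
    ultimately show ?thesis by simp
  qed
  have F1: "Fr E x' \<subseteq> Fr E x"
  proof
    fix e assume "e \<in> Fr E x'"
    then show "e \<in> Fr E x" using dz by (cases "e \<in> Fr E x") (auto simp: Fr_def x'_def)
  qed
  have S1: "Sl E B x' \<subseteq> Sl E B x"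
  proof
    fix v assume v: "v \<in> Sl E B x'"
    then have vB': "v \<in> B" "(\<Sum>e\<in>delta E v. x' e) > 1" by (auto simp: Sl_def)
    have "sv v \<noteq> 1" using tight vB' BV by auto
    then have "sv v > 1" using xB vB' by (force simp: sv_def)
    then show "v \<in> Sl E B x" using vB' by (simp add: Sl_def sv_def)
  qed
  have strict: "Fr E x' \<subset> Fr E x \<or> Sl E B x' \<subset> Sl E B x"
  proof -
    consider (a) e where "e \<in> Fr E x" "d e > 0" "t = (1 - x e) / d e"
      | (b) e where "e \<in> Fr E x" "d e < 0" "t = x e / (- d e)"
      | (c) v where "v \<in> Sl E B x" "dv v < 0" "t = (sv v - 1) / (- dv v)"
      using tT unfolding T_def by auto
    then show ?thesis
    proof cases
      case a
      then have "x' e = 1" by (simp add: x'_def)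
      then have "e \<notin> Fr E x'" by (simp add: Fr_def)
      then show ?thesis using a F1 by blast
    next
      case b
      then have "x' e = 0" by (simp add: x'_def)
      then have "e \<notin> Fr E x'" by (simp add: Fr_def)
      then show ?thesis using b F1 by blast
    next
      case c
      then have "t * dv v = - (sv v - 1)" by (simp add: field_simps)
      then have "(\<Sum>e\<in>delta E v. x' e) = 1" using sv' by simp
      then have "v \<notin> Sl E B x'" by (simp add: Sl_def)
      then show ?thesis using c S1 by blast
    qed
  qed
  have "card (Fr E x') + card (Sl E B x') < card (Fr E x) + card (Sl E B x)"
  proof -
    have "card (Fr E x') \<le> card (Fr E x)" using F1 fF by (simp add: card_mono)
    moreover have "card (Sl E B x') \<le> card (Sl E B x)" using S1 fS by (simp add: card_mono)
    moreover have "card (Fr E x') < card (Fr E x) \<or> card (Sl E B x') < card (Sl E B x)"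
      using strict psubset_card_mono[OF fF] psubset_card_mono[OF fS] by blast
    ultimately show ?thesis by linarith
  qed
  then show ?thesis using feas cost by blast
qed

lemma perturb:
  assumes sg: "simple_graph V E" and BV: "B \<subseteq> V" and fx: "lp_feasible V E B x"
    and kd: "kern V E x d" and e1: "d e1 \<noteq> 0"
  shows "\<exists>x'. lp_feasible V E B x' \<and> lp_cost E w x' \<le> lp_cost E w x \<and>
           card (Fr E x') + card (Sl E B x') < card (Fr E x) + card (Sl E B x)"
proof (cases "(\<Sum>e\<in>E. w e * d e) \<le> 0")
  case True then show ?thesis using perturb0[OF assms] by blast
next
  case False
  have "kern V E x (\<lambda>e. - d e)" using kd by (simp add: kern_def sum_negf)
  moreover have "(\<Sum>e\<in>E. w e * - d e) \<le> 0" using False by (simp add: sum_negf)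
  moreover have "- d e1 \<noteq> 0" using e1 by simp
  ultimately show ?thesis using perturb0[OF sg BV fx, of "\<lambda>e. - d e" e1 w] by blast
qed



lemma sum_support:
  assumes fE: "finite E" and FE: "F \<subseteq> E" and sup: "\<And>e. e \<notin> F \<Longrightarrow> d e = 0"
  shows "(\<Sum>e\<in>delta E v. d e) = (\<Sum>e\<in>{e\<in>F. v \<in> e}. d e)"
proof -
  have "finite (delta E v)" using fE by (simp add: delta_def)
  moreover have "{e\<in>F. v \<in> e} \<subseteq> delta E v" using FE by (auto simp: delta_def)
  moreover have "\<forall>e\<in>delta E v - {e\<in>F. v \<in> e}. d e = 0" using sup by (auto simp: delta_def)
  ultimately show ?thesis by (rule sum.mono_neutral_right)
qed

lemma split_sum:
  assumes fE: "finite E" and xb: "\<And>e. e \<in> E \<Longrightarrow> 0 \<le> x e \<and> x e \<le> 1"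
  shows "(\<Sum>e\<in>delta E v. x e) = (\<Sum>e\<in>{e\<in>Fr E x. v \<in> e}. x e) + real (card {e\<in>delta E v. x e = 1})"
proof -
  let ?A = "{e\<in>Fr E x. v \<in> e}" and ?D = "delta E v"
  have fD: "finite ?D" using fE by (simp add: delta_def)
  have eq: "?D = ?A \<union> (?D - Fr E x)" by (auto simp: delta_def Fr_def)
  have "(\<Sum>e\<in>?D. x e) = (\<Sum>e\<in>?A. x e) + (\<Sum>e\<in>?D - Fr E x. x e)"
    by (subst eq, rule sum.union_disjoint) (use fD eq in \<open>auto simp: delta_def intro: finite_subset\<close>)
  moreover have "(\<Sum>e\<in>?D - Fr E x. x e) = (\<Sum>e\<in>?D - Fr E x. if x e = 1 then 1 else 0)"
  proof (rule sum.cong)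
    fix e assume "e \<in> ?D - Fr E x"
    then have "e \<in> E" "\<not> (0 < x e \<and> x e < 1)" by (auto simp: delta_def Fr_def)
    then show "x e = (if x e = 1 then 1 else 0)" using xb[of e] by auto
  qed simp
  moreover have "(\<Sum>e\<in>?D - Fr E x. (if x e = 1 then 1 else 0::real)) = real (card {e\<in>?D - Fr E x. x e = 1})"
    using fD by (simp add: sum.inter_filter[symmetric])
  moreover have "{e\<in>?D - Fr E x. x e = 1} = {e\<in>?D. x e = 1}" by (auto simp: Fr_def)
  ultimately show ?thesis by simp
qed



lemma edge2: "simple_graph V E \<Longrightarrow> e \<in> E \<Longrightarrow> card e = 2 \<and> e \<subseteq> V"
  by (auto simp: simple_graph_def)

lemma term_struct:
  assumes sg: "simple_graph V E" and BV: "B \<subseteq> V" and fx: "lp_feasible V E B x"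
    and trm: "\<forall>d. kern V E x d \<longrightarrow> (\<forall>e. d e = 0)"
  shows "\<forall>e\<in>Fr E x. \<forall>v\<in>e. card {f\<in>Fr E x. v \<in> f} = 2"
    and "\<forall>e\<in>Fr E x. x e = 1/2"
proof -
  have fE: "finite E" using finE[OF sg] .
  have fV: "finite V" using sg by (simp add: simple_graph_def)
  define F where "F = Fr E x"
  have fF: "finite F" using fE by (simp add: F_def Fr_def)
  have FE: "F \<subseteq> E" by (auto simp: F_def Fr_def)
  have xb: "\<And>e. e \<in> E \<Longrightarrow> 0 \<le> x e \<and> x e \<le> 1" using fx by (simp add: lp_feasible_def)
  have xF: "\<And>e. e \<in> F \<Longrightarrow> 0 < x e \<and> x e < 1" by (simp add: F_def Fr_def)
  define W where "W = {v\<in>V. \<exists>e\<in>F. v \<in> e}"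
  have fW: "finite W" using fV by (simp add: W_def)
  define sv where "sv v = (\<Sum>e\<in>delta E v. x e)" for v
  define A where "A v = {e\<in>F. v \<in> e}" for v
  define deg where "deg v = card (A v)" for v
  have fA: "finite (A v)" for v using fF by (simp add: A_def)
  have spl: "sv v = (\<Sum>e\<in>A v. x e) + real (card {e\<in>delta E v. x e = 1})" for v
    using split_sum[OF fE xb] by (simp add: sv_def A_def F_def)
  have AW: "A v \<noteq> {}" if "v \<in> W" for v using that by (auto simp: W_def A_def)
  have tightW: "(\<Sum>e\<in>A v. x e) = 1 \<and> deg v \<ge> 2" if v: "v \<in> W" "sv v = 1" for v
  proof -
    have pos: "(\<Sum>e\<in>A v. x e) > 0"
      by (rule sum_pos[OF fA AW[OF v(1)]]) (use xF in \<open>auto simp: A_def\<close>)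
    have le1: "\<And>e. e \<in> A v \<Longrightarrow> x e < 1" using xF by (auto simp: A_def)
    have "card {e\<in>delta E v. x e = 1} = 0"
      using spl[of v] v(2) pos by (cases "card {e\<in>delta E v. x e = 1}") auto
    then have s1: "(\<Sum>e\<in>A v. x e) = 1" using spl[of v] v(2) by simp
    have "deg v \<noteq> 0" using AW[OF v(1)] fA by (simp add: deg_def)
    moreover have "deg v \<noteq> 1"
    proof
      assume "deg v = 1"
      then have "card (A v) = 1" by (simp add: deg_def)
      then obtain f where "A v = {f}" by (rule card_1_singletonE)
      then show False using s1 le1[of f] by simp
    qed
    ultimately show ?thesis using s1 by simp
  qed
  have sd: "\<And>d v. (\<And>e. e \<notin> F \<Longrightarrow> d e = 0) \<Longrightarrow> (\<Sum>e\<in>delta E v. d e) = (\<Sum>e\<in>A v. d e)"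
    unfolding A_def by (rule sum_support[OF fE FE])
  define TF where "TF = {v\<in>W. sv v = 1}"
  have fTF: "finite TF" using fW by (simp add: TF_def)
  have cardle: "card F \<le> card TF"
  proof (rule ccontr)
    assume "\<not> card F \<le> card TF"
    then have "card TF < card F" by simp
    from lin_sol[OF fTF fF this, of "\<lambda>v e. if v \<in> e then 1 else 0"] obtain d :: "'a set \<Rightarrow> real" where
      d: "\<forall>e. e \<notin> F \<longrightarrow> d e = 0" "\<exists>e\<in>F. d e \<noteq> 0"
         "\<forall>v\<in>TF. (\<Sum>e\<in>F. (if v \<in> e then 1 else 0) * d e) = 0" by blast
    have "kern V E x d"
      unfolding kern_def
    proof (intro conjI allI ballI impI)
      fix e assume "e \<notin> Fr E x" then show "d e = 0" using d(1) by (simp add: F_def)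
    next
      fix v assume v: "v \<in> V" "(\<Sum>e\<in>delta E v. x e) = 1"
      have "(\<Sum>e\<in>delta E v. d e) = (\<Sum>e\<in>A v. d e)" by (rule sd) (use d(1) in auto)
      also have "\<dots> = (\<Sum>e\<in>F. (if v \<in> e then 1 else 0) * d e)"
      proof -
        have "(\<Sum>e\<in>A v. d e) = (\<Sum>e\<in>F. if v \<in> e then d e else 0)"
          unfolding A_def using fF by (simp add: sum.inter_filter)
        also have "\<dots> = (\<Sum>e\<in>F. (if v \<in> e then 1 else 0) * d e)" by (rule sum.cong) auto
        finally show ?thesis .
      qed
      also have "\<dots> = 0"
      proof (cases "v \<in> W")
        case True then show ?thesis using d(3) v by (auto simp: TF_def sv_def)
      next
        case False then have "\<forall>e\<in>F. v \<notin> e" using v by (auto simp: W_def)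
        then show ?thesis by simp
      qed
      finally show "(\<Sum>e\<in>delta E v. d e) = 0" .
    qed
    then show False using trm d(2) by blast
  qed
  have cnt: "(\<Sum>v\<in>W. deg v) = 2 * card F"
  proof -
    have "(\<Sum>v\<in>W. deg v) = (\<Sum>v\<in>W. \<Sum>e\<in>F. if v \<in> e then 1 else 0)"
      using fF by (simp add: deg_def A_def sum.inter_filter[symmetric])
    also have "\<dots> = (\<Sum>e\<in>F. \<Sum>v\<in>W. if v \<in> e then 1 else 0)" by (rule sum.swap)
    also have "\<dots> = (\<Sum>e\<in>F. card e)"
    proof (rule sum.cong)
      fix e assume e: "e \<in> F"
      then have "e \<subseteq> W" using edge2[OF sg] FE by (auto simp: W_def)
      then have "{v\<in>W. v \<in> e} = e" by auto
      then show "(\<Sum>v\<in>W. if v \<in> e then 1 else 0) = card e"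
        using fW by (simp add: sum.inter_filter[symmetric])
    qed simp
    also have "\<dots> = (\<Sum>e\<in>F. 2)" using edge2[OF sg] FE by (intro sum.cong) auto
    finally show ?thesis by simp
  qed
  define g where "g v = (if v \<in> TF then 2 else 1::nat)" for v
  have gle: "g v \<le> deg v" if "v \<in> W" for v
  proof (cases "v \<in> TF")
    case True
    then have "sv v = 1" by (simp add: TF_def)
    then have "deg v \<ge> 2" using tightW[OF that] by blast
    then show ?thesis using True by (simp add: g_def)
  next
    case False
    have "card (A v) > 0" using AW[OF that] fA by (simp add: card_gt_0_iff)
    then show ?thesis using False by (simp add: g_def deg_def)
  qed
  have TFW: "TF \<subseteq> W" by (auto simp: TF_def)
  have "(\<Sum>v\<in>W. g v) = (\<Sum>v\<in>TF. g v) + (\<Sum>v\<in>W - TF. g v)"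
    using sum.subset_diff[OF TFW fW, of g] by simp
  also have "\<dots> = 2 * card TF + card (W - TF)" by (simp add: g_def)
  finally have sg1: "(\<Sum>v\<in>W. g v) = 2 * card TF + card (W - TF)" .
  have "(\<Sum>v\<in>W. g v) \<le> (\<Sum>v\<in>W. deg v)" using gle by (rule sum_mono)
  then have "card (W - TF) = 0" using sg1 cnt cardle by linarith
  then have WTF: "W = TF" using fW TFW by auto
  have eqs: "(\<Sum>v\<in>W. 2) = (\<Sum>v\<in>W. deg v)"
  proof -
    have "(\<Sum>v\<in>W. g v) = (\<Sum>v\<in>W. 2)" using WTF by (intro sum.cong) (auto simp: g_def)
    then have "(\<Sum>v\<in>W. 2) \<le> (\<Sum>v\<in>W. deg v)" using \<open>(\<Sum>v\<in>W. g v) \<le> (\<Sum>v\<in>W. deg v)\<close> by simp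
    moreover have "(\<Sum>v\<in>W. deg v) \<le> (\<Sum>v\<in>W. (2::nat))" using cnt cardle WTF by simp
    ultimately show ?thesis by linarith
  qed
  then have deg2: "deg v = 2" if "v \<in> W" for v
  proof -
    have le: "2 \<le> deg i" if "i \<in> W" for i
    proof -
      have "g i = 2" using WTF that by (simp add: g_def)
      then show ?thesis using gle[OF that] by simp
    qed
    from sum_mono_inv[OF eqs le that fW] show ?thesis by simp
  qed
  have sum1: "(\<Sum>e\<in>A v. x e) = 1" if "v \<in> W" for v
  proof -
    have "v \<in> TF" using that WTF by simp
    then have "sv v = 1" by (simp add: TF_def)
    then show ?thesis using tightW[OF that] by blast
  qed
  show "\<forall>e\<in>Fr E x. \<forall>v\<in>e. card {f\<in>Fr E x. v \<in> f} = 2"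
  proof (intro ballI)
    fix e v assume "e \<in> Fr E x" "v \<in> e"
    then have "v \<in> W" using edge2[OF sg] FE by (auto simp: W_def F_def)
    then show "card {f\<in>Fr E x. v \<in> f} = 2" using deg2 by (simp add: deg_def A_def F_def)
  qed
  define d0 where "d0 e = (if e \<in> F then x e - 1/2 else 0)" for e
  have "kern V E x d0"
    unfolding kern_def
  proof (intro conjI allI ballI impI)
    fix e assume "e \<notin> Fr E x" then show "d0 e = 0" by (simp add: d0_def F_def)
  next
    fix v assume v: "v \<in> V" "(\<Sum>e\<in>delta E v. x e) = 1"
    have "(\<Sum>e\<in>delta E v. d0 e) = (\<Sum>e\<in>A v. d0 e)" by (rule sd) (simp add: d0_def)
    also have "\<dots> = (\<Sum>e\<in>A v. x e - 1/2)" by (intro sum.cong) (auto simp: d0_def A_def)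
    also have "\<dots> = 0"
    proof (cases "v \<in> W")
      case True
      then have "card (A v) = 2" using deg2 by (simp add: deg_def)
      then show ?thesis using sum1[OF True] by (simp add: sum_subtractf)
    next
      case False then have "A v = {}" using v by (auto simp: W_def A_def)
      then show ?thesis by simp
    qed
    finally show "(\<Sum>e\<in>delta E v. d0 e) = 0" .
  qed
  note kd0 = this
  have "kern V E x d0 \<longrightarrow> (\<forall>e. d0 e = 0)" using trm by (rule spec)
  then have z: "\<forall>e. d0 e = 0" using kd0 by (rule mp)
  show "\<forall>e\<in>Fr E x. x e = 1/2"
  proof
    fix e assume "e \<in> Fr E x"
    then have "e \<in> F" by (simp add: F_def)
    moreover have "d0 e = 0" using z by (rule spec)
    ultimately show "x e = 1/2" unfolding d0_def by simp
  qed
qed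



lemma even_cycle_kern:
  assumes sg: "simple_graph V E"
    and trm: "\<forall>d. kern V E x d \<longrightarrow> (\<forall>e. d e = 0)"
    and c: "distinct c" "3 \<le> length c" "cycle_edges c \<subseteq> Fr E x" "even (length c)"
  shows False
proof -
  define n where "n = length c"
  have fE: "finite E" using finE[OF sg] .
  have FE: "Fr E x \<subseteq> E" by (auto simp: Fr_def)
  define idx where "idx e = (THE i. i < n \<and> ce c i = e)" for e
  have idxce: "idx (ce c j) = j" if "j < n" for j
    unfolding idx_def
  proof (rule the_equality)
    show "j < n \<and> ce c j = ce c j" using that by simp
    fix i assume "i < n \<and> ce c i = ce c j"
    then show "i = j" using ce_inj[OF c(1) c(2)] that by (auto simp: n_def)
  qed
  define d1 where "d1 e = (if e \<in> cycle_edges c then (-1::real) ^ (idx e) else 0)" for e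
  have sup: "\<And>e. e \<notin> Fr E x \<Longrightarrow> d1 e = 0" using c(3) by (auto simp: d1_def)
  have "kern V E x d1"
    unfolding kern_def
  proof (intro conjI allI ballI impI)
    fix e assume "e \<notin> Fr E x" then show "d1 e = 0" by (rule sup)
  next
    fix v assume v: "v \<in> V" "(\<Sum>e\<in>delta E v. x e) = 1"
    have "(\<Sum>e\<in>delta E v. d1 e) = (\<Sum>e\<in>{e\<in>Fr E x. v \<in> e}. d1 e)"
      by (rule sum_support[OF fE FE sup])
    also have "\<dots> = (\<Sum>e\<in>{e\<in>cycle_edges c. v \<in> e}. d1 e)"
    proof (rule sum.mono_neutral_right)
      show "finite {e\<in>Fr E x. v \<in> e}" using fE FE by (auto intro: finite_subset)
      show "{e\<in>cycle_edges c. v \<in> e} \<subseteq> {e\<in>Fr E x. v \<in> e}" using c(3) by auto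
      show "\<forall>e\<in>{e\<in>Fr E x. v \<in> e} - {e\<in>cycle_edges c. v \<in> e}. d1 e = 0"
        by (auto simp: d1_def)
    qed
    also have "\<dots> = 0"
    proof (cases "v \<in> set c")
      case False
      then have "{e\<in>cycle_edges c. v \<in> e} = {}" using mem_cycle_edge[of _ c v] by auto
      then show ?thesis by (simp only: sum.empty)
    next
      case True
      then obtain k where k: "k < n" "v = c ! k" by (auto simp: in_set_conv_nth n_def)
      note EA = edges_at[OF c(1) c(2) k(1)[unfolded n_def]]
      note P = prv_props[OF k(1) c(2)[folded n_def]]
      have m1: "ce c k \<in> cycle_edges c" "ce c (prv n k) \<in> cycle_edges c"
        using k P by (auto simp: cycle_edges_eq n_def)
      have "(\<Sum>e\<in>{e\<in>cycle_edges c. v \<in> e}. d1 e) = d1 (ce c k) + d1 (ce c (prv n k))"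
        using EA k by (simp add: n_def)
      also have "\<dots> = (-1) ^ k + (-1) ^ (prv n k)"
        using m1 idxce k P by (simp add: d1_def)
      also have "\<dots> = 0"
      proof (cases "k = 0")
        case True
        then have "prv n k = n - 1" using P by simp
        moreover have "odd (n - 1)" using c(4) c(2) using c(4) c(2) by (cases c) (auto simp: n_def)
        ultimately show ?thesis using True by simp
      next
        case False
        then have "prv n k = k - 1" using P by simp
        moreover have "k = Suc (k - 1)" using False by simp
        ultimately show ?thesis by (metis add.inverse_inverse power_Suc mult_minus1 add.right_inverse)
      qed
      finally show ?thesis .
    qed
    finally show "(\<Sum>e\<in>delta E v. d1 e) = 0" .
  qed
  note kd = this
  have "kern V E x d1 \<longrightarrow> (\<forall>e. d1 e = 0)" using trm by (rule spec)
  then have z: "\<forall>e. d1 e = 0" using kd by (rule mp)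
  have "0 < n" using c(2) unfolding n_def by linarith
  then have "idx (ce c 0) = 0" by (rule idxce)
  moreover have "ce c 0 \<in> cycle_edges c" using c(2) by (auto simp: cycle_edges_eq)
  ultimately have "d1 (ce c 0) = 1" by (simp add: d1_def)
  then show False using z by simp
qed



definition nice :: "'a set \<Rightarrow> 'a set set \<Rightarrow> 'a set \<Rightarrow> ('a set \<Rightarrow> real) \<Rightarrow> bool" where
  "nice V E B y \<longleftrightarrow> lp_feasible V E B y \<and> (\<forall>e\<in>E. y e \<in> {0, 1/2, 1}) \<and>
      vertex_disjoint_odd_cycles {e \<in> E. y e = 1/2}"

lemma terminal:
  assumes sg: "simple_graph V E" and BV: "B \<subseteq> V" and fx: "lp_feasible V E B x"
    and trm: "\<forall>d. kern V E x d \<longrightarrow> (\<forall>e. d e = 0)"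
  shows "nice V E B x"
proof -
  note TS = term_struct[OF sg BV fx trm]
  have fE: "finite E" using finE[OF sg] .
  have fF: "finite (Fr E x)" using fE by (simp add: Fr_def)
  have shp: "\<forall>e\<in>Fr E x. \<exists>u v. e = {u,v} \<and> u \<noteq> v"
  proof
    fix e assume "e \<in> Fr E x"
    then have "e \<in> E" by (simp add: Fr_def)
    then show "\<exists>u v. e = {u,v} \<and> u \<noteq> v" using sg unfolding simple_graph_def by blast
  qed
  obtain Cs where Cs: "\<forall>c\<in>Cs. distinct c \<and> 3 \<le> length c"
      "\<forall>c\<in>Cs. \<forall>d\<in>Cs. c \<noteq> d \<longrightarrow> set c \<inter> set d = {}" "Fr E x = \<Union>(cycle_edges ` Cs)"
    using two_reg[OF fF shp TS(1)] by blast
  have odd: "odd (length c)" if "c \<in> Cs" for c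
  proof (rule ccontr)
    assume "\<not> odd (length c)"
    moreover have "cycle_edges c \<subseteq> Fr E x" using Cs(3) that by auto
    ultimately show False using even_cycle_kern[OF sg trm] Cs(1) that by blast
  qed
  have xb: "\<And>e. e \<in> E \<Longrightarrow> 0 \<le> x e \<and> x e \<le> 1" using fx by (simp add: lp_feasible_def)
  have vals: "\<forall>e\<in>E. x e \<in> {0, 1/2, 1}"
  proof
    fix e assume e: "e \<in> E"
    show "x e \<in> {0, 1/2, 1}"
    proof (cases "e \<in> Fr E x")
      case True then show ?thesis using TS(2) by auto
    next
      case False then show ?thesis using xb[OF e] e by (auto simp: Fr_def)
    qed
  qed
  have half: "{e \<in> E. x e = 1/2} = Fr E x" using TS(2) by (auto simp: Fr_def)
  have "vertex_disjoint_odd_cycles {e \<in> E. x e = 1/2}"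
    unfolding vertex_disjoint_odd_cycles_def half
    by (rule exI[of _ Cs]) (use Cs odd in \<open>auto simp: is_odd_cycle_def\<close>)
  then show ?thesis using fx vals by (simp add: nice_def)
qed

lemma reduce:
  assumes sg: "simple_graph V E" and BV: "B \<subseteq> V"
  shows "\<forall>x. lp_feasible V E B x \<and> card (Fr E x) + card (Sl E B x) = n \<longrightarrow>
           (\<exists>y. nice V E B y \<and> lp_cost E w y \<le> lp_cost E w x)"
proof (induction n rule: less_induct)
  case (less n)
  show ?case
  proof (intro allI impI)
    fix x assume x: "lp_feasible V E B x \<and> card (Fr E x) + card (Sl E B x) = n"
    show "\<exists>y. nice V E B y \<and> lp_cost E w y \<le> lp_cost E w x"
    proof (cases "\<exists>d e. kern V E x d \<and> d e \<noteq> 0")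
      case True
      then obtain d e where "kern V E x d" "d e \<noteq> 0" by blast
      from perturb[OF sg BV _ this, of w] x obtain x' where x':
        "lp_feasible V E B x'" "lp_cost E w x' \<le> lp_cost E w x"
        "card (Fr E x') + card (Sl E B x') < card (Fr E x) + card (Sl E B x)" by blast
      then have "card (Fr E x') + card (Sl E B x') < n" using x by simp
      from less[OF this] x'(1) obtain y where "nice V E B y" "lp_cost E w y \<le> lp_cost E w x'" by blast
      then show ?thesis using x'(2) by force
    next
      case False
      then have "\<forall>d. kern V E x d \<longrightarrow> (\<forall>e. d e = 0)" by blast
      then have "nice V E B x" using terminal[OF sg BV] x by blast
      then show ?thesis by blast
    qed
  qed
qed

theorem theorem3:
  fixes V :: "'a set" and E :: "'a set set" and B :: "'a set"
    and w :: "'a set \<Rightarrow> real"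
  assumes "simple_graph V E"
    and "B \<subseteq> V"
    and "\<exists>x. lp_feasible V E B x"
  shows "\<exists>xs. lp_optimal V E B w xs \<and>
           (\<forall>e\<in>E. xs e \<in> {0, 1/2, 1}) \<and>
           vertex_disjoint_odd_cycles {e \<in> E. xs e = 1/2}"
proof -
  note sg = assms(1) and BV = assms(2)
  have fE: "finite E" using finE[OF sg] .
  have red: "\<exists>y. nice V E B y \<and> lp_cost E w y \<le> lp_cost E w x" if "lp_feasible V E B x" for x
    using reduce[OF sg BV, of "card (Fr E x) + card (Sl E B x)" w] that by blast
  define r where "r y = (\<lambda>e. if e \<in> E then y e else 0)" for y :: "'a set \<Rightarrow> real"
  have dsub: "delta E v \<subseteq> E" for v by (auto simp: delta_def)
  have rsum: "(\<Sum>e\<in>delta E v. r y e) = (\<Sum>e\<in>delta E v. y e)" for y v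
    using dsub by (intro sum.cong) (auto simp: r_def)
  have rnice: "nice V E B (r y)" if "nice V E B y" for y
  proof -
    have "lp_feasible V E B (r y)" using that rsum by (simp add: nice_def lp_feasible_def r_def)
    moreover have "{e \<in> E. r y e = 1/2} = {e \<in> E. y e = 1/2}" by (auto simp: r_def)
    ultimately show ?thesis using that by (simp add: nice_def r_def)
  qed
  have rcost: "lp_cost E w (r y) = lp_cost E w y" for y
    by (simp add: lp_cost_def r_def)
  define N where "N = {y. nice V E B y \<and> (\<forall>e. e \<notin> E \<longrightarrow> y e = 0)}"
  have "N \<subseteq> {f. \<forall>e. (e \<in> E \<longrightarrow> f e \<in> {0, 1/2, 1::real}) \<and> (e \<notin> E \<longrightarrow> f e = 0)}"
    by (auto simp: N_def nice_def)
  moreover have "finite {f. \<forall>e. (e \<in> E \<longrightarrow> f e \<in> {0, 1/2, 1::real}) \<and> (e \<notin> E \<longrightarrow> f e = 0)}"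
    using fE by (intro finite_set_of_finite_funs) auto
  ultimately have fN: "finite N" by (rule finite_subset)
  have rN: "r y \<in> N" if "nice V E B y" for y using rnice[OF that] by (simp add: N_def r_def)
  obtain x0 where "lp_feasible V E B x0" using assms(3) by blast
  then obtain y0 where "nice V E B y0" using red by blast
  then have neN: "N \<noteq> {}" using rN by blast
  define m where "m = Min (lp_cost E w ` N)"
  have "m \<in> lp_cost E w ` N" using fN neN by (simp add: m_def)
  then obtain y where yN: "y \<in> N" and ym: "lp_cost E w y = m" by blast
  have ymin: "lp_cost E w y \<le> lp_cost E w z" if "z \<in> N" for z
    using fN that ym by (simp add: m_def)
  have ny: "nice V E B y" using yN by (simp add: N_def)
  have "lp_optimal V E B w y"
    unfolding lp_optimal_def
  proof (intro conjI allI impI)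
    show "lp_feasible V E B y" using ny by (simp add: nice_def)
    fix z assume "lp_feasible V E B z"
    then obtain z' where z': "nice V E B z'" "lp_cost E w z' \<le> lp_cost E w z" using red by blast
    have "lp_cost E w y \<le> lp_cost E w (r z')" using ymin rN[OF z'(1)] by blast
    then show "lp_cost E w y \<le> lp_cost E w z" using z'(2) rcost by simp
  qed
  then show ?thesis using ny by (auto simp: nice_def)
qed


end
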